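(* Let $p,q\in\{y=0\}\subset\mathbb R^2$, $p\ne q$, $L=|p-q|$. For $\epsilon\in(0,1]$ let $\Upsilon_\epsilon\in H^2([0,L];\mathbb R^2)$ be a curve with constant speed $|\partial_x\Upsilon_\epsilon|\equiv\ell(\Upsilon_\epsilon)/L$, $\Upsilon_\epsilon(0)=p$, $\Upsilon_\epsilon(L)=q$, horizontal tangent at $x=0$ and $x=L$, and suppose there is $C>0$ with $\ell(\Upsilon_\epsilon)-|p-q|\le C\epsilon^{1/2}$ and $\epsilon^{1/2}\int_0^{\ell(\Upsilon_\epsilon)}\kappa_{\gamma_\epsilon}^2\,ds\le C$ for all $\epsilon$. Let $\theta_\epsilon\in H^1([0,L])$ be a lifting with $\partial_x\Upsilon_\epsilon=\frac{\ell(\Upsilon_\epsilon)}{L}(\cos\theta_\epsilon,\sin\theta_\epsilon)$, and let $\Phi(\theta)=\int_0^\theta2\sqrt{1-\cos\phi}\,d\phi$. Then $$\lim_{\epsilon\to0^+}\Big\|\frac{2\pi}{8\sqrt2}\partial_x(\Phi\circ\theta_\epsilon)-\partial_x\theta_\epsilon\Big\|_{\mathrm{flat},[0,L]}=0.$$ In particular, if $\epsilon_k\to0^+$ and $\omega\in M_{\mathrm{fin},\mathbb Z}([0,L])$ are such that $\|\kappa_{\Upsilon_{\epsilon_k}}-\omega\|_{\mathrm{flat},[0,L]}\to0$, then $\frac{2\pi}{8\sqrt2}\partial_x(\Phi\circ\theta_{\epsilon_k})\to\omega$ in the flat norm.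
   Context: $\ell(\Upsilon)=\int_0^L|\partial_x\Upsilon|\,dx$; $\gamma_\epsilon$ is the arclength reparametrization of $\Upsilon_\epsilon$ and $\kappa_{\gamma_\epsilon}$ its curvature; $\kappa_{\Upsilon_\epsilon}=\frac{L}{\ell(\Upsilon_\epsilon)}\partial_x\theta_\epsilon$. $M_{\mathrm{fin},\mathbb Z}([0,L])$ is the set of measures $2\pi\sum_{j=1}^Nc_j\delta_{x_j}$ with $c_j\in\mathbb Z$, $0\le x_1<\dots<x_N\le L$. $\|\nu\|_{\mathrm{flat},[0,L]}=\sup\{\int\varphi\,d\nu:\varphi\in C^{0,1}([0,L]),\ \|\varphi\|_{L^\infty}+\mathrm{Lip}(\varphi)\le1\}$. *)

theory Defs
  imports "HOL-Analysis.Analysis"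
begin

text \<open>f is absolutely continuous on [a,b] with (a.e.) derivative g, g in L^1([a,b]):
  f x = f a + integral of g over [a,x] for all x in [a,b]  (i.e. f in W^{1,1}, weak derivative g).\<close>
definition W11_deriv :: "real \<Rightarrow> real \<Rightarrow> (real \<Rightarrow> 'a::euclidean_space) \<Rightarrow> (real \<Rightarrow> 'a) \<Rightarrow> bool" where
  "W11_deriv a b f g \<longleftrightarrow> g absolutely_integrable_on {a..b} \<and>
     (\<forall>x\<in>{a..b}. (g has_integral (f x - f a)) {a..x})"

definition H1_deriv :: "real \<Rightarrow> real \<Rightarrow> (real \<Rightarrow> 'a::euclidean_space) \<Rightarrow> (real \<Rightarrow> 'a) \<Rightarrow> bool" where
  "H1_deriv a b f g \<longleftrightarrow> W11_deriv a b f g \<and> (\<lambda>x. (norm (g x))\<^sup>2) integrable_on {a..b}"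

definition H2_derivs :: "real \<Rightarrow> real \<Rightarrow> (real \<Rightarrow> 'a::euclidean_space) \<Rightarrow> (real \<Rightarrow> 'a) \<Rightarrow> (real \<Rightarrow> 'a) \<Rightarrow> bool" where
  "H2_derivs a b f g1 g2 \<longleftrightarrow> H1_deriv a b f g1 \<and> H1_deriv a b g1 g2"

definition curve_length :: "real \<Rightarrow> (real \<Rightarrow> real \<times> real) \<Rightarrow> real" where
  "curve_length L V = integral {0..L} (\<lambda>x. norm (V x))"

definition Phi :: "real \<Rightarrow> real" where
  "Phi t = (if 0 \<le> t then integral {0..t} (\<lambda>u. 2 * sqrt (1 - cos u))
            else - integral {t..0} (\<lambda>u. 2 * sqrt (1 - cos u)))"

definition flat_test :: "real \<Rightarrow> (real \<Rightarrow> real) \<Rightarrow> bool" where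
  "flat_test L \<phi> \<longleftrightarrow> (\<exists>M K. (\<forall>x\<in>{0..L}. \<bar>\<phi> x\<bar> \<le> M) \<and>
      (\<forall>x\<in>{0..L}. \<forall>y\<in>{0..L}. \<bar>\<phi> x - \<phi> y\<bar> \<le> K * \<bar>x - y\<bar>) \<and> M + K \<le> 1)"

text \<open>A (signed) measure nu on [0,L] is represented by its action phi \<mapsto> \<integral> phi d nu on test functions.\<close>
definition flat_norm :: "real \<Rightarrow> ((real \<Rightarrow> real) \<Rightarrow> real) \<Rightarrow> real" where
  "flat_norm L T = Sup {T \<phi> | \<phi>. flat_test L \<phi>}"

definition dens :: "real \<Rightarrow> (real \<Rightarrow> real) \<Rightarrow> (real \<Rightarrow> real) \<Rightarrow> real" where
  "dens L f = (\<lambda>\<phi>. integral {0..L} (\<lambda>x. \<phi> x * f x))"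

definition atoms :: "nat \<Rightarrow> (nat \<Rightarrow> int) \<Rightarrow> (nat \<Rightarrow> real) \<Rightarrow> (real \<Rightarrow> real) \<Rightarrow> real" where
  "atoms N c xs = (\<lambda>\<phi>. 2 * pi * (\<Sum>j<N. of_int (c j) * \<phi> (xs j)))"

text \<open>Admissible data for an element of M_fin,Z([0,L]): 0 \<le> x_1 < ... < x_N \<le> L.\<close>
definition Mfin_data :: "real \<Rightarrow> nat \<Rightarrow> (nat \<Rightarrow> real) \<Rightarrow> bool" where
  "Mfin_data L N xs \<longleftrightarrow> (\<forall>j<N. 0 \<le> xs j \<and> xs j \<le> L) \<and> (\<forall>i j. i < j \<and> j < N \<longrightarrow> xs i < xs j)"

end

theory Submission
  imports Defs
begin

definition pf :: "real \<Rightarrow> real" where "pf u = 2 * sqrt (1 - cos u)"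

lemma pf_cont: "continuous_on S pf"
  unfolding pf_def by (intro continuous_intros)

lemma Phi_alt:
  assumes "0 \<le> R" "-R \<le> t"
  shows "Phi t = integral {-R..t} pf - integral {-R..0} pf"
proof (cases "0 \<le> t")
  case True
  have "integral {-R..t} pf = integral {-R..0} pf + integral {0..t} pf"
    using Henstock_Kurzweil_Integration.integral_combine[where f=pf and a="-R" and c=0 and b=t, OF _ _ integrable_continuous_interval[OF pf_cont]] assms True
    by linarith
  then show ?thesis using True by (simp add: Phi_def pf_def[symmetric])
next
  case False
  have "integral {-R..0} pf = integral {-R..t} pf + integral {t..0} pf"
    using Henstock_Kurzweil_Integration.integral_combine[where f=pf and a="-R" and c=t and b=0, OF _ _ integrable_continuous_interval[OF pf_cont]] assms False
    by linarith
  then show ?thesis using False by (simp add: Phi_def pf_def[symmetric])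
qed

lemma Phi_deriv: "(Phi has_real_derivative pf t) (at t)"
proof -
  define R where "R = \<bar>t\<bar> + 1"
  have R: "0 \<le> R" "-R < t" "t < R" unfolding R_def by auto
  have "((\<lambda>x. integral {-R..x} pf) has_real_derivative pf t) (at t within {-R..R})"
    by (rule integral_has_real_derivative) (use R pf_cont in auto)
  then have "((\<lambda>x. integral {-R..x} pf) has_real_derivative pf t) (at t)"
    using R by (simp add: at_within_Icc_at)
  then have "((\<lambda>x. integral {-R..x} pf - integral {-R..0} pf) has_real_derivative pf t) (at t)"
    by (auto intro!: derivative_eq_intros)
  then show ?thesis
    by (rule has_field_derivative_transform_within_open[where S="{-R<..}"])
       (use R in \<open>auto simp: Phi_alt[of R]\<close>)
qed

lemma Phi_0: "Phi 0 = 0" by (simp add: Phi_def)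

lemma pf_half: assumes "0 \<le> u" "u \<le> 2*pi" shows "pf u = 2 * sqrt 2 * sin (u/2)"
proof -
  have "1 - cos u = 2 * sin (u/2)^2" using cos_double_sin[of "u/2"] by simp
  moreover have "sin (u/2) \<ge> 0" using assms by (intro sin_ge_zero) auto
  ultimately show ?thesis by (simp add: pf_def real_sqrt_mult)
qed

lemma Phi_explicit: assumes "0 \<le> t" "t \<le> 2*pi"
  shows "Phi t = 4 * sqrt 2 - 4 * sqrt 2 * cos (t/2)"
proof -
  have "((\<lambda>u. 2 * sqrt 2 * sin (u/2)) has_integral
        ((- 4 * sqrt 2 * cos (t/2)) - (- 4 * sqrt 2 * cos (0/2)))) {0..t}"
    by (rule fundamental_theorem_of_calculus) (use assms in \<open>auto intro!: derivative_eq_intros simp: has_real_derivative_iff_has_vector_derivative[symmetric]\<close>)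
  then have "((\<lambda>u. 2 * sqrt 2 * sin (u/2)) has_integral (4 * sqrt 2 - 4 * sqrt 2 * cos (t/2))) {0..t}"
    by simp
  then have "(pf has_integral (4 * sqrt 2 - 4 * sqrt 2 * cos (t/2))) {0..t}"
    by (rule has_integral_eq[rotated]) (use assms pf_half in auto)
  then show ?thesis using assms by (simp add: Phi_def pf_def[symmetric] integral_unique)
qed

lemma Phi_pi: "Phi pi = 4 * sqrt 2" using Phi_explicit[of pi] by simp
lemma Phi_2pi: "Phi (2*pi) = 8 * sqrt 2" using Phi_explicit[of "2*pi"] by simp

lemma Phi_shift: "Phi (t + 2*pi) = Phi t + 8 * sqrt 2"
proof -
  have "\<forall>x. ((\<lambda>t. Phi (t + 2*pi) - Phi t) has_real_derivative 0) (at x)"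
  proof
    fix x
    have d: "((\<lambda>t. t + 2*pi) has_real_derivative 1) (at x)" by (auto intro!: derivative_eq_intros)
    have "((\<lambda>t. Phi (t + 2*pi) - Phi t) has_real_derivative (pf (x + 2*pi) * 1 - pf x)) (at x)"
      by (intro derivative_intros DERIV_chain2[OF Phi_deriv d] Phi_deriv)
    moreover have "pf (x + 2*pi) = pf x" by (simp add: pf_def)
    ultimately show "((\<lambda>t. Phi (t + 2*pi) - Phi t) has_real_derivative 0) (at x)" by simp
  qed
  from DERIV_isconst_all[OF this, of t 0] show ?thesis by (simp add: Phi_0 Phi_2pi)
qed

lemma Phi_shift_nat: "Phi (t + 2*pi * real n) = Phi t + 8 * sqrt 2 * real n"
proof (induction n)
  case 0 then show ?case by simp
next
  case (Suc n)
  have "Phi (t + 2*pi * real (Suc n)) = Phi ((t + 2*pi * real n) + 2*pi)" by (simp add: algebra_simps)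
  also have "\<dots> = Phi t + 8 * sqrt 2 * real (Suc n)" using Suc Phi_shift[of "t + 2*pi * real n"] by (simp add: algebra_simps)
  finally show ?case .
qed

lemma Phi_shift_int: "Phi (t + 2*pi * of_int k) = Phi t + 8 * sqrt 2 * of_int k"
proof (cases "k \<ge> 0")
  case True
  then obtain n where "k = int n" by (metis nonneg_eq_int)
  then show ?thesis using Phi_shift_nat by simp
next
  case False
  define n where "n = nat (-k)"
  have n: "k = - int n" using False n_def by simp
  have "Phi ((t + 2*pi * of_int k) + 2*pi * real n) = Phi (t + 2*pi * of_int k) + 8 * sqrt 2 * real n"
    by (rule Phi_shift_nat)
  then show ?thesis using n by simp
qed

lemma Phi_int_pi: "Phi (of_int k * pi) = 4 * sqrt 2 * of_int k"
proof (cases "even k")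
  case True
  then obtain m where m: "k = 2*m" by auto
  have "Phi (0 + 2*pi * of_int m) = Phi 0 + 8 * sqrt 2 * of_int m" by (rule Phi_shift_int)
  then show ?thesis using m by (simp add: Phi_0 algebra_simps)
next
  case False
  then obtain m where m: "k = 2*m+1" by (metis oddE)
  have "Phi (pi + 2*pi * of_int m) = Phi pi + 8 * sqrt 2 * of_int m" by (rule Phi_shift_int)
  then show ?thesis using m by (simp add: Phi_pi algebra_simps)
qed

definition gg :: "real \<Rightarrow> real" where "gg t = 2 * pi / (8 * sqrt 2) * Phi t - t"

lemma gg_int: "gg (of_int k * pi) = 0"
  unfolding gg_def Phi_int_pi by (simp add: field_simps)

lemma gg_deriv: "(gg has_real_derivative (2 * pi / (8 * sqrt 2) * pf t - 1)) (at t)"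
  unfolding gg_def by (intro DERIV_diff DERIV_cmult Phi_deriv DERIV_ident)

lemma gg_deriv_bound: "\<bar>2 * pi / (8 * sqrt 2) * pf t - 1\<bar> \<le> 1"
proof -
  have "1 - cos t \<le> 2" by (simp add: minus_le_iff)
  then have "sqrt (1 - cos t) \<le> sqrt 2" by (rule real_sqrt_le_mono)
  then have p1: "pf t \<le> 2 * sqrt 2" by (simp add: pf_def)
  have p0: "0 \<le> pf t" by (simp add: pf_def)
  have "2 * pi / (8 * sqrt 2) * pf t \<le> 2 * pi / (8 * sqrt 2) * (2 * sqrt 2)"
    using p1 by (intro mult_left_mono) auto
  also have "\<dots> = pi / 2" by (simp add: field_simps)
  finally have "2 * pi / (8 * sqrt 2) * pf t \<le> pi / 2" .
  moreover have "0 \<le> 2 * pi / (8 * sqrt 2) * pf t" using p0 by simp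
  ultimately show ?thesis using pi_half_less_two by linarith
qed

lemma gg_lip: "\<bar>gg a - gg b\<bar> \<le> \<bar>a - b\<bar>"
proof -
  have main: "\<bar>gg y - gg x\<bar> \<le> y - x" if xy: "x < y" for x y
  proof -
    obtain z where "gg y - gg x = (y - x) * (2 * pi / (8 * sqrt 2) * pf z - 1)"
      using MVT2[OF xy gg_deriv] by blast
    then have "\<bar>gg y - gg x\<bar> = (y - x) * \<bar>2 * pi / (8 * sqrt 2) * pf z - 1\<bar>"
      using that by (simp add: abs_mult)
    also have "\<dots> \<le> (y - x) * 1" using that gg_deriv_bound by (intro mult_left_mono) auto
    finally show ?thesis by simp
  qed
  show ?thesis
    using main[of a b] main[of b a] by (cases a b rule: linorder_cases) auto
qed

lemma sin_lower: assumes "0 \<le> s" "s \<le> pi/2" shows "s \<le> 3 * sin s"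
proof (cases "s \<le> pi/3")
  case True
  have "(\<lambda>x. sin x - x/2) 0 \<le> (\<lambda>x. sin x - x/2) s"
  proof (rule DERIV_nonneg_imp_nondecreasing[OF assms(1)])
    fix x assume x: "0 \<le> x" "x \<le> s"
    have "cos (pi/3) \<le> cos x" using x True by (intro cos_monotone_0_pi_le) auto
    then have "cos x - 1/2 \<ge> 0" by (simp add: cos_60)
    then show "\<exists>y. ((\<lambda>x. sin x - x/2) has_real_derivative y) (at x) \<and> 0 \<le> y"
      by (intro exI[of _ "cos x - 1/2"]) (auto intro!: derivative_eq_intros)
  qed
  then have "s/2 \<le> sin s" by simp
  then show ?thesis using assms by linarith
next
  case False
  have "sin (pi/3) \<le> sin s" using False assms by (intro sin_monotone_2pi_le) auto
  then have "sqrt 3 / 2 \<le> sin s" by (simp add: sin_60)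
  moreover have "4/3 \<le> sqrt 3" by (rule real_le_rsqrt) (simp add: power2_eq_square)
  moreover have "s < 2" using assms pi_half_less_two by linarith
  ultimately show ?thesis by linarith
qed

lemma gg_bound: "\<bar>gg t\<bar> \<le> 3 * \<bar>sin t\<bar>"
proof -
  define k where "k = \<lfloor>t / pi + 1/2\<rfloor>"
  define s where "s = t - of_int k * pi"
  have "of_int k \<le> t / pi + 1/2" "t / pi + 1/2 < of_int k + 1" unfolding k_def by linarith+
  then have "of_int k * pi \<le> (t / pi + 1/2) * pi" "(t / pi + 1/2) * pi < (of_int k + 1) * pi"
    by (auto intro: mult_right_mono)
  moreover have "(t / pi + 1/2) * pi = t + pi/2" "(of_int k + 1) * pi = of_int k * pi + pi"
    by (auto simp: field_simps)
  ultimately have s: "-pi/2 \<le> s" "s \<le> pi/2" unfolding s_def by auto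
  have t: "t = s + pi * of_int k" unfolding s_def by simp
  have sint: "\<bar>sin t\<bar> = \<bar>sin s\<bar>" unfolding t sin_add by simp
  have "\<bar>s\<bar> \<le> 3 * \<bar>sin s\<bar>"
  proof (cases "0 \<le> s")
    case True then show ?thesis using sin_lower[of s] s sin_ge_zero[of s] by simp
  next
    case False then show ?thesis using sin_lower[of "-s"] s sin_ge_zero[of "-s"] by simp
  qed
  moreover have "\<bar>gg t\<bar> \<le> \<bar>s\<bar>"
    using gg_lip[of t "of_int k * pi"] gg_int[of k] unfolding s_def by simp
  ultimately show ?thesis using sint by simp
qed

lemma int_cmul: "f integrable_on S \<Longrightarrow> (\<lambda>x. c * f x) integrable_on S" for f :: "real \<Rightarrow> real"
  using integrable_cmul[of f S c] by simp

lemma sbp: "(\<Sum>i<n. a i * (b (Suc i) - b i)) =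
   (\<Sum>i<n. (a i - a (Suc i)) * b (Suc i)) + a n * b n - a 0 * b 0"
  for a b :: "nat \<Rightarrow> real"
  by (induction n) (auto simp: algebra_simps)

lemma sum_integrals:
  fixes F :: "real \<Rightarrow> real" and n :: nat
  assumes F: "F integrable_on {0..L}" and L: "0 \<le> L" and n: "0 < n"
  shows "(\<Sum>i<n. integral {real i * L / n .. real (Suc i) * L / n} F) = integral {0..L} F"
proof -
  have "m \<le> n \<Longrightarrow> (\<Sum>i<m. integral {real i * L / n .. real (Suc i) * L / n} F)
          = integral {0..real m * L / n} F" for m
  proof (induction m)
    case 0 then show ?case by simp
  next
    case (Suc m)
    have le: "real m * L / n \<le> real (Suc m) * L / n" using L n by (simp add: divide_right_mono mult_right_mono)
    have le2: "real (Suc m) * L / n \<le> L" using L n Suc.prems mult_left_mono[of "real (Suc m)" "real n" L] by (simp add: field_simps)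
    have "F integrable_on {0..real (Suc m) * L / n}"
      by (rule integrable_on_subinterval[OF F]) (use le2 in auto)
    then have "integral {0..real m * L / n} F + integral {real m * L / n..real (Suc m) * L / n} F
          = integral {0..real (Suc m) * L / n} F"
      by (intro Henstock_Kurzweil_Integration.integral_combine) (use le L n in auto)
    then show ?case using Suc by simp
  qed
  from this[of n] show ?thesis using n by simp
qed

lemma flat_key:
  fixes f H \<phi> :: "real \<Rightarrow> real"
  assumes L: "0 < L" and f: "f absolutely_integrable_on {0..L}"
    and H: "\<And>x. x \<in> {0..L} \<Longrightarrow> (f has_integral H x) {0..x}" and HL: "H L = 0"
    and Hc: "continuous_on {0..L} H"
    and lip: "\<And>x y. x \<in> {0..L} \<Longrightarrow> y \<in> {0..L} \<Longrightarrow> \<bar>\<phi> x - \<phi> y\<bar> \<le> K * \<bar>x - y\<bar>"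
    and \<phi>f: "(\<lambda>x. \<phi> x * f x) integrable_on {0..L}"
  shows "integral {0..L} (\<lambda>x. \<phi> x * f x) \<le> K * integral {0..L} (\<lambda>x. \<bar>H x\<bar>)"
proof -
  have K: "0 \<le> K"
  proof (rule ccontr)
    assume "\<not> 0 \<le> K"
    then have "K * L < 0" using L by (simp add: mult_neg_pos)
    then show False using lip[of 0 L] L by auto
  qed
  have fi: "f integrable_on {0..L}" and afi: "(\<lambda>x. \<bar>f x\<bar>) integrable_on {0..L}"
    using f by (auto simp: absolutely_integrable_on_def)
  have H0: "H 0 = 0" using H[of 0] L has_integral_unique[OF _ has_integral_refl(2)[of f 0]] by auto
  have Hdiff: "integral {a..b} f = H b - H a" if "0 \<le> a" "a \<le> b" "b \<le> L" for a b
  proof -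
    have "integral {0..a} f + integral {a..b} f = integral {0..b} f"
      by (intro Henstock_Kurzweil_Integration.integral_combine integrable_on_subinterval[OF fi]) (use that in auto)
    moreover have "integral {0..a} f = H a" "integral {0..b} f = H b"
      using H[of a] H[of b] that by (auto intro: integral_unique)
    ultimately show ?thesis by simp
  qed
  have aHi: "(\<lambda>x. \<bar>H x\<bar>) integrable_on {0..L}"
    by (intro integrable_continuous_interval continuous_intros Hc)
  define I where "I = integral {0..L} (\<lambda>x. \<phi> x * f x)"
  define J where "J = integral {0..L} (\<lambda>x. \<bar>H x\<bar>)"
  define F where "F = integral {0..L} (\<lambda>x. \<bar>f x\<bar>)"
  have "I \<le> K * J + e" if e: "0 < e" for e
  proof -
    define \<delta> where "\<delta> = e / (2 * (K * L + 1))"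
    have \<delta>: "0 < \<delta>" unfolding \<delta>_def using e K L by (auto intro!: divide_pos_pos add_nonneg_pos)
    have "uniformly_continuous_on {0..L} H"
      by (rule compact_uniformly_continuous[OF Hc]) auto
    then obtain d where d: "0 < d" and dH: "\<And>x y. x \<in> {0..L} \<Longrightarrow> y \<in> {0..L} \<Longrightarrow> dist y x < d \<Longrightarrow> dist (H y) (H x) < \<delta>"
      unfolding uniformly_continuous_on_def using \<delta> by metis
    obtain n :: nat where n: "max (L / d) (2 * K * L * F / e) < real n" using reals_Archimedean2 by blast
    have n0: "0 < n" using n L d by (metis divide_pos_pos less_max_iff_disj of_nat_0_less_iff order.strict_trans)
    define h where "h = L / n"
    define x where "x i = real i * L / n" for i
    have h0: "0 < h" unfolding h_def using L n0 by simp
    have hd: "h < d" unfolding h_def using n n0 d L by (simp add: field_simps)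
    have xs: "x (Suc i) = x i + h" for i unfolding x_def h_def by (simp add: distrib_right add_divide_distrib)
    have x0: "x 0 = 0" and xn: "x n = L" unfolding x_def using n0 by auto
    have xin: "0 \<le> x i" "x i \<le> x (Suc i)" "x (Suc i) \<le> L" if "i < n" for i
    proof -
      show "0 \<le> x i" unfolding x_def using L by simp
      show "x i \<le> x (Suc i)" using xs[of i] h0 by simp
      have "real (Suc i) * L \<le> real n * L" using that L by (intro mult_right_mono) auto
      then have "real (Suc i) * L / n \<le> real n * L / n" by (intro divide_right_mono) auto
      then show "x (Suc i) \<le> L" unfolding x_def using n0 by simp
    qed
    have sub: "{x i..x (Suc i)} \<subseteq> {0..L}" if "i < n" for i using xin[OF that] by auto
    have step1: "integral {x i..x (Suc i)} (\<lambda>t. \<phi> t * f t)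
        \<le> \<phi> (x i) * (H (x (Suc i)) - H (x i)) + K * h * integral {x i..x (Suc i)} (\<lambda>t. \<bar>f t\<bar>)"
      if i: "i < n" for i
    proof -
      let ?S = "{x i..x (Suc i)}"
      have i1: "(\<lambda>t. \<phi> t * f t) integrable_on ?S" by (rule integrable_on_subinterval[OF \<phi>f sub[OF i]])
      have i2: "f integrable_on ?S" by (rule integrable_on_subinterval[OF fi sub[OF i]])
      have i3: "(\<lambda>t. \<bar>f t\<bar>) integrable_on ?S" by (rule integrable_on_subinterval[OF afi sub[OF i]])
      have "integral ?S (\<lambda>t. \<phi> t * f t - \<phi> (x i) * f t) \<le> integral ?S (\<lambda>t. K * h * \<bar>f t\<bar>)"
      proof (rule Henstock_Kurzweil_Integration.integral_le)
        show "(\<lambda>t. \<phi> t * f t - \<phi> (x i) * f t) integrable_on ?S"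
          by (intro integrable_diff i1 int_cmul i2)
        show "(\<lambda>t. K * h * \<bar>f t\<bar>) integrable_on ?S" by (intro int_cmul i3)
        fix t assume t: "t \<in> ?S"
        have "\<bar>\<phi> t - \<phi> (x i)\<bar> \<le> K * \<bar>t - x i\<bar>" using sub[OF i] t by (intro lip) auto
        also have "\<dots> \<le> K * h" using t xs[of i] K by (intro mult_left_mono) auto
        finally have "\<bar>\<phi> t - \<phi> (x i)\<bar> * \<bar>f t\<bar> \<le> K * h * \<bar>f t\<bar>" by (intro mult_right_mono) auto
        moreover have "\<phi> t * f t - \<phi> (x i) * f t \<le> \<bar>\<phi> t - \<phi> (x i)\<bar> * \<bar>f t\<bar>"
          by (metis abs_ge_self abs_mult left_diff_distrib)
        ultimately show "\<phi> t * f t - \<phi> (x i) * f t \<le> K * h * \<bar>f t\<bar>" by linarith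
      qed
      moreover have "integral ?S (\<lambda>t. \<phi> t * f t - \<phi> (x i) * f t) = integral ?S (\<lambda>t. \<phi> t * f t) - \<phi> (x i) * integral ?S f"
        using i1 i2 by (simp add: Henstock_Kurzweil_Integration.integral_diff int_cmul)
      moreover have "integral ?S (\<lambda>t. K * h * \<bar>f t\<bar>) = K * h * integral ?S (\<lambda>t. \<bar>f t\<bar>)" by simp
      moreover have "integral ?S f = H (x (Suc i)) - H (x i)" using xin[OF i] by (intro Hdiff)
      ultimately show ?thesis by simp
    qed
    have step3: "h * \<bar>H (x (Suc i))\<bar> \<le> integral {x i..x (Suc i)} (\<lambda>t. \<bar>H t\<bar>) + h * \<delta>" if i: "i < n" for i
    proof -
      let ?S = "{x i..x (Suc i)}"
      have "integral ?S (\<lambda>t. \<bar>H (x (Suc i))\<bar>) \<le> integral ?S (\<lambda>t. \<bar>H t\<bar> + \<delta>)"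
      proof (rule Henstock_Kurzweil_Integration.integral_le)
        show "(\<lambda>t. \<bar>H (x (Suc i))\<bar>) integrable_on ?S" by (intro integrable_continuous_interval continuous_on_const)
        show "(\<lambda>t. \<bar>H t\<bar> + \<delta>) integrable_on ?S"
          by (intro integrable_add integrable_on_subinterval[OF aHi sub[OF i]] integrable_continuous_interval continuous_on_const)
        fix t assume t: "t \<in> ?S"
        have "dist (H (x (Suc i))) (H t) < \<delta>"
        proof (rule dH)
          show "t \<in> {0..L}" "x (Suc i) \<in> {0..L}" using sub[OF i] t xin[OF i] by auto
          have "x i \<le> t" "t \<le> x (Suc i)" using t by auto
          then have "\<bar>x (Suc i) - t\<bar> \<le> h" using xs[of i] by linarith
          then show "dist (x (Suc i)) t < d" using hd by (simp add: dist_real_def)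
        qed
        then show "\<bar>H (x (Suc i))\<bar> \<le> \<bar>H t\<bar> + \<delta>" by (simp add: dist_real_def)
      qed
      moreover have "integral ?S (\<lambda>t. \<bar>H t\<bar> + \<delta>) = integral ?S (\<lambda>t. \<bar>H t\<bar>) + h * \<delta>"
      proof -
        have "integral ?S (\<lambda>t. \<bar>H t\<bar> + \<delta>) = integral ?S (\<lambda>t. \<bar>H t\<bar>) + integral ?S (\<lambda>t. \<delta>)"
          by (intro Henstock_Kurzweil_Integration.integral_add integrable_on_subinterval[OF aHi sub[OF i]] integrable_continuous_interval continuous_on_const)
        moreover have "integral ?S (\<lambda>t. \<delta>) = h * \<delta>" using xs[of i] h0 by simp
        ultimately show ?thesis by simp
      qed
      moreover have "integral ?S (\<lambda>t. \<bar>H (x (Suc i))\<bar>) = h * \<bar>H (x (Suc i))\<bar>"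
        using xin[OF i] by (simp add: xs[of i])
      ultimately show ?thesis by linarith
    qed
    have SI: "(\<Sum>i<n. integral {x i..x (Suc i)} G) = integral {0..L} G" if G: "G integrable_on {0..L}" for G :: "real \<Rightarrow> real"
      unfolding x_def by (rule sum_integrals[OF G _ n0]) (use L in simp)
    have "I = (\<Sum>i<n. integral {x i..x (Suc i)} (\<lambda>t. \<phi> t * f t))"
      unfolding I_def by (rule SI[OF \<phi>f, symmetric])
    also have "\<dots> \<le> (\<Sum>i<n. \<phi> (x i) * (H (x (Suc i)) - H (x i)) + K * h * integral {x i..x (Suc i)} (\<lambda>t. \<bar>f t\<bar>))"
    proof (rule sum_mono)
      fix i assume "i \<in> {..<n}"
      then show "integral {x i..x (Suc i)} (\<lambda>t. \<phi> t * f t) \<le> \<phi> (x i) * (H (x (Suc i)) - H (x i)) + K * h * integral {x i..x (Suc i)} (\<lambda>t. \<bar>f t\<bar>)"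
        by (intro step1) simp
    qed
    also have "\<dots> = (\<Sum>i<n. (\<phi> (x i) - \<phi> (x (Suc i))) * H (x (Suc i))) + K * h * F"
    proof -
      have "(\<Sum>i<n. \<phi> (x i) * (H (x (Suc i)) - H (x i)) + K * h * integral {x i..x (Suc i)} (\<lambda>t. \<bar>f t\<bar>))
         = (\<Sum>i<n. \<phi> (x i) * (H (x (Suc i)) - H (x i))) + K * h * (\<Sum>i<n. integral {x i..x (Suc i)} (\<lambda>t. \<bar>f t\<bar>))"
        by (simp add: sum.distrib sum_distrib_left)
      also have "(\<Sum>i<n. \<phi> (x i) * (H (x (Suc i)) - H (x i)))
          = (\<Sum>i<n. (\<phi> (x i) - \<phi> (x (Suc i))) * H (x (Suc i))) + \<phi> (x n) * H (x n) - \<phi> (x 0) * H (x 0)"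
        by (rule sbp)
      also have "(\<Sum>i<n. integral {x i..x (Suc i)} (\<lambda>t. \<bar>f t\<bar>)) = F"
        unfolding F_def by (rule SI[OF afi])
      finally show ?thesis by (simp add: x0 xn HL H0)
    qed
    also have "\<dots> \<le> (\<Sum>i<n. K * (h * \<bar>H (x (Suc i))\<bar>)) + K * h * F"
    proof -
      have P: "(\<phi> (x i) - \<phi> (x (Suc i))) * H (x (Suc i)) \<le> K * (h * \<bar>H (x (Suc i))\<bar>)" if i: "i \<in> {..<n}" for i
      proof -
        have i: "i < n" using i by simp
        have "\<bar>\<phi> (x i) - \<phi> (x (Suc i))\<bar> \<le> K * \<bar>x i - x (Suc i)\<bar>" using xin[OF i] by (intro lip) auto
        then have "\<bar>\<phi> (x i) - \<phi> (x (Suc i))\<bar> \<le> K * h" using xs[of i] h0 by simp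
        then have "\<bar>\<phi> (x i) - \<phi> (x (Suc i))\<bar> * \<bar>H (x (Suc i))\<bar> \<le> K * h * \<bar>H (x (Suc i))\<bar>"
          by (intro mult_right_mono) auto
        moreover have "(\<phi> (x i) - \<phi> (x (Suc i))) * H (x (Suc i)) \<le> \<bar>\<phi> (x i) - \<phi> (x (Suc i))\<bar> * \<bar>H (x (Suc i))\<bar>"
          by (metis abs_ge_self abs_mult)
        ultimately show ?thesis by simp
      qed
      show ?thesis by (rule add_right_mono, rule sum_mono, rule P)
    qed
    also have "\<dots> \<le> (\<Sum>i<n. K * (integral {x i..x (Suc i)} (\<lambda>t. \<bar>H t\<bar>) + h * \<delta>)) + K * h * F"
    proof (rule add_right_mono, rule sum_mono)
      fix i assume "i \<in> {..<n}"
      then have i: "i < n" by simp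
      show "K * (h * \<bar>H (x (Suc i))\<bar>) \<le> K * (integral {x i..x (Suc i)} (\<lambda>t. \<bar>H t\<bar>) + h * \<delta>)"
        by (rule mult_left_mono[OF step3[OF i] K])
    qed
    also have "(\<Sum>i<n. K * (integral {x i..x (Suc i)} (\<lambda>t. \<bar>H t\<bar>) + h * \<delta>))
        = K * (\<Sum>i<n. integral {x i..x (Suc i)} (\<lambda>t. \<bar>H t\<bar>)) + K * (real n * h) * \<delta>"
      by (simp add: sum.distrib distrib_left sum_distrib_left mult.assoc)
    also have "(\<Sum>i<n. integral {x i..x (Suc i)} (\<lambda>t. \<bar>H t\<bar>)) = J"
      unfolding J_def by (rule SI[OF aHi])
    also have "K * J + K * (real n * h) * \<delta> + K * h * F \<le> K * J + e / 2 + e / 2"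
    proof -
      have nh: "real n * h = L" unfolding h_def using n0 by simp
      have "K * (real n * h) * \<delta> = (e / 2) * (K * L / (K * L + 1))"
        unfolding nh \<delta>_def by simp
      also have "\<dots> \<le> (e / 2) * 1"
        using K L e by (intro mult_left_mono) (auto simp: divide_le_eq_1 add_nonneg_pos)
      finally have A: "K * (real n * h) * \<delta> \<le> e / 2" by simp
      have "2 * K * L * F / e < real n" using n by (metis max_less_iff_conj)
      then have B: "2 * K * L * F < real n * e" using e by (simp add: divide_less_eq)
      have "K * h * F = (K * L * F) / real n" unfolding h_def by simp
      also have "\<dots> \<le> e / 2" using B n0 by (simp add: pos_divide_le_eq mult.commute mult.left_commute)
      finally show ?thesis using A by simp
    qed
    finally show ?thesis by simp
  qed
  from field_le_epsilon[OF this] show ?thesis unfolding I_def J_def .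
qed

lemma W11_cont:
  fixes f g :: "real \<Rightarrow> real"
  assumes "W11_deriv a b f g"
  shows "continuous_on {a..b} f"
proof -
  have "g absolutely_integrable_on {a..b}" using assms unfolding W11_deriv_def by blast
  then have gi: "g integrable_on {a..b}" by (rule set_lebesgue_integral_eq_integral(1))
  have eq: "f x = f a + integral {a..x} g" if "x \<in> {a..b}" for x
  proof -
    have "(g has_integral f x - f a) {a..x}" using assms that unfolding W11_deriv_def by blast
    then have "integral {a..x} g = f x - f a" by (rule integral_unique)
    then show ?thesis by simp
  qed
  have "continuous_on {a..b} (\<lambda>x. f a + integral {a..x} g)"
    by (intro continuous_intros indefinite_integral_continuous_1 gi)
  then show ?thesis
  proof (rule continuous_on_eq)
    fix x assume "x \<in> {a..b}"
    then show "f a + integral {a..x} g = f x" by (rule eq[symmetric])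
  qed
qed

lemma flat_test_props:
  assumes "flat_test L \<phi>" "0 < L"
  shows "\<And>x. x \<in> {0..L} \<Longrightarrow> \<bar>\<phi> x\<bar> \<le> 1" and "continuous_on {0..L} \<phi>"
    and "\<exists>K. 0 \<le> K \<and> K \<le> 1 \<and> (\<forall>x\<in>{0..L}. \<forall>y\<in>{0..L}. \<bar>\<phi> x - \<phi> y\<bar> \<le> K * \<bar>x - y\<bar>)"
proof -
  obtain M K where M: "\<forall>x\<in>{0..L}. \<bar>\<phi> x\<bar> \<le> M" and K: "\<forall>x\<in>{0..L}. \<forall>y\<in>{0..L}. \<bar>\<phi> x - \<phi> y\<bar> \<le> K * \<bar>x - y\<bar>"
    and MK: "M + K \<le> 1" using assms(1) unfolding flat_test_def by blast
  have "\<bar>\<phi> 0\<bar> \<le> M" using M assms(2) by simp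
  then have M0: "0 \<le> M" by (meson abs_ge_zero order_trans)
  have K0: "0 \<le> K"
  proof (rule ccontr)
    assume "\<not> 0 \<le> K"
    then have "K * L < 0" using assms(2) by (simp add: mult_neg_pos)
    moreover have "\<bar>\<phi> 0 - \<phi> L\<bar> \<le> K * \<bar>0 - L\<bar>" using K assms(2) by (meson atLeastAtMost_iff less_imp_le order_refl)
    moreover have "K * \<bar>0 - L\<bar> = K * L" using assms(2) by simp
    moreover have "0 \<le> \<bar>\<phi> 0 - \<phi> L\<bar>" by simp
    ultimately show False by linarith
  qed
  show "\<bar>\<phi> x\<bar> \<le> 1" if "x \<in> {0..L}" for x
  proof -
    have "\<bar>\<phi> x\<bar> \<le> M" using M that by blast
    then show ?thesis using MK K0 by linarith
  qed
  show "\<exists>K. 0 \<le> K \<and> K \<le> 1 \<and> (\<forall>x\<in>{0..L}. \<forall>y\<in>{0..L}. \<bar>\<phi> x - \<phi> y\<bar> \<le> K * \<bar>x - y\<bar>)"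
    using K K0 MK M0 by (intro exI[of _ K]) auto
  show "continuous_on {0..L} \<phi>"
    unfolding continuous_on_iff
  proof (intro ballI allI impI)
    fix x e :: real assume x: "x \<in> {0..L}" and e: "0 < e"
    show "\<exists>d>0. \<forall>x'\<in>{0..L}. dist x' x < d \<longrightarrow> dist (\<phi> x') (\<phi> x) < e"
    proof (intro exI[of _ "e / (K + 1)"] conjI ballI impI)
      show "0 < e / (K + 1)" using e K0 by simp
      fix y assume y: "y \<in> {0..L}" and d: "dist y x < e / (K + 1)"
      have "\<bar>\<phi> y - \<phi> x\<bar> \<le> K * \<bar>y - x\<bar>" using K x y by blast
      also have "\<dots> \<le> (K + 1) * \<bar>y - x\<bar>" by (simp add: distrib_right)
      also have "\<dots> < (K + 1) * (e / (K + 1))" using d K0 by (intro mult_strict_left_mono) (auto simp: dist_real_def)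
      also have "\<dots> = e" using K0 by simp
      finally show "dist (\<phi> y) (\<phi> x) < e" by (simp add: dist_real_def)
    qed
  qed
qed

lemma phi_int:
  fixes g :: "real \<Rightarrow> real"
  assumes "flat_test L \<phi>" "0 < L" "g absolutely_integrable_on {0..L}"
  shows "(\<lambda>x. \<phi> x * g x) absolutely_integrable_on {0..L}"
proof -
  have c: "continuous_on {0..L} \<phi>" by (rule flat_test_props(2)[OF assms(1,2)])
  show ?thesis
  proof (rule absolutely_integrable_bounded_measurable_product_real[OF _ _ _ assms(3)])
    show "\<phi> \<in> borel_measurable (lebesgue_on {0..L})"
      by (rule continuous_imp_measurable_on_sets_lebesgue[OF c]) simp
    show "{0..L} \<in> sets lebesgue" by simp
    show "bounded (\<phi> ` {0..L})" by (rule compact_imp_bounded[OF compact_continuous_image[OF c compact_Icc]])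
  qed
qed

lemma dens_le_abs:
  fixes g :: "real \<Rightarrow> real"
  assumes "flat_test L \<phi>" "0 < L" "g absolutely_integrable_on {0..L}"
  shows "dens L g \<phi> \<le> integral {0..L} (\<lambda>x. \<bar>g x\<bar>)"
  unfolding dens_def
proof (rule Henstock_Kurzweil_Integration.integral_le)
  show "(\<lambda>x. \<phi> x * g x) integrable_on {0..L}"
    using phi_int[OF assms] by (simp add: absolutely_integrable_on_def)
  show "(\<lambda>x. \<bar>g x\<bar>) integrable_on {0..L}" using assms(3) by (simp add: absolutely_integrable_on_def)
  fix x assume x: "x \<in> {0..L}"
  have "\<bar>\<phi> x\<bar> \<le> 1" by (rule flat_test_props(1)[OF assms(1,2) x])
  then have "\<bar>\<phi> x\<bar> * \<bar>g x\<bar> \<le> 1 * \<bar>g x\<bar>" by (intro mult_right_mono) auto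
  then show "\<phi> x * g x \<le> \<bar>g x\<bar>" by (metis abs_ge_self abs_mult mult_1 order_trans)
qed

lemma atoms_le:
  assumes "flat_test L \<phi>" "0 < L" "Mfin_data L N xs"
  shows "atoms N c xs \<phi> \<le> 2 * pi * (\<Sum>j<N. \<bar>of_int (c j)\<bar>)"
  unfolding atoms_def
proof (intro mult_left_mono sum_mono)
  fix j assume "j \<in> {..<N}"
  then have "xs j \<in> {0..L}" using assms(3) by (auto simp: Mfin_data_def)
  then have "\<bar>\<phi> (xs j)\<bar> \<le> 1" by (rule flat_test_props(1)[OF assms(1,2)])
  then have "\<bar>of_int (c j)\<bar> * \<bar>\<phi> (xs j)\<bar> \<le> \<bar>of_int (c j)\<bar> * 1" by (intro mult_left_mono) auto
  then show "of_int (c j) * \<phi> (xs j) \<le> \<bar>of_int (c j)\<bar>" by (metis abs_ge_self abs_mult mult_1_right order_trans)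
qed simp

lemma flat_test_zero: "flat_test L (\<lambda>x. 0)"
  unfolding flat_test_def by (intro exI[of _ 0] conjI) auto

lemma flat_le:
  assumes "\<And>\<phi>. flat_test L \<phi> \<Longrightarrow> T \<phi> \<le> B" "T (\<lambda>x. 0) = 0"
  shows "0 \<le> flat_norm L T" "flat_norm L T \<le> B"
proof -
  let ?S = "{T \<phi> | \<phi>. flat_test L \<phi>}"
  have ne: "?S \<noteq> {}" using flat_test_zero by blast
  have bdd: "bdd_above ?S" unfolding bdd_above_def
  proof (intro exI[of _ B] ballI)
    fix y assume "y \<in> ?S"
    then obtain \<psi> where "y = T \<psi>" "flat_test L \<psi>" by blast
    then show "y \<le> B" using assms(1) by simp
  qed
  have "0 \<in> ?S" using flat_test_zero[of L] assms(2) by (metis (mono_tags, lifting) mem_Collect_eq)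
  then show "0 \<le> flat_norm L T" unfolding flat_norm_def by (rule cSup_upper[OF _ bdd])
  show "flat_norm L T \<le> B" unfolding flat_norm_def by (rule cSup_least[OF ne]) (use assms(1) in auto)
qed

lemma flat_upper:
  assumes "\<And>\<phi>. flat_test L \<phi> \<Longrightarrow> T \<phi> \<le> B" "flat_test L \<phi>"
  shows "T \<phi> \<le> flat_norm L T"
proof -
  let ?S = "{T \<phi> | \<phi>. flat_test L \<phi>}"
  have bdd: "bdd_above ?S" unfolding bdd_above_def
  proof (intro exI[of _ B] ballI)
    fix y assume "y \<in> ?S"
    then obtain \<psi> where "y = T \<psi>" "flat_test L \<psi>" by blast
    then show "y \<le> B" using assms(1) by simp
  qed
  show ?thesis unfolding flat_norm_def by (rule cSup_upper[OF _ bdd]) (use assms(2) in auto)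
qed

lemma gg_cont: "continuous_on S gg"
  by (rule continuous_at_imp_continuous_on) (use DERIV_isCont[OF gg_deriv] in blast)

lemma abs_amgm: "0 < d \<Longrightarrow> \<bar>a::real\<bar> \<le> a^2 / (2*d) + d/2"
proof -
  assume d: "0 < d"
  have "0 \<le> (\<bar>a\<bar> - d)^2" by simp
  then have "2 * d * \<bar>a\<bar> \<le> a^2 + d^2" by (simp add: power2_eq_square algebra_simps)
  then have "\<bar>a\<bar> \<le> (a^2 + d^2) / (2 * d)" using d by (simp add: field_simps)
  also have "\<dots> = a^2 / (2*d) + d/2" using d by (simp add: field_simps power2_eq_square)
  finally show ?thesis .
qed

lemma sin_sq_le: fixes \<sigma> t :: real assumes "\<sigma> = 1 \<or> \<sigma> = -1" shows "(sin t)^2 \<le> 2 * (1 - \<sigma> * cos t)"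
proof -
  have s2: "\<sigma> * \<sigma> = 1" using assms by auto
  have "(sin t)^2 = (1 - \<sigma> * cos t) * (1 + \<sigma> * cos t)"
  proof -
    have "(1 - \<sigma> * cos t) * (1 + \<sigma> * cos t) = 1 - (\<sigma> * \<sigma>) * (cos t)^2"
      by (simp add: algebra_simps power2_eq_square)
    then show ?thesis using s2 sin_squared_eq[of t] by simp
  qed
  also have "\<dots> \<le> (1 - \<sigma> * cos t) * 2"
  proof (rule mult_left_mono)
    have "\<bar>\<sigma> * cos t\<bar> \<le> 1" using assms by (auto simp: abs_mult)
    then show "1 + \<sigma> * cos t \<le> 2" "0 \<le> 1 - \<sigma> * cos t" by auto
  qed
  finally show ?thesis by simp
qed

lemma key_eps:
  fixes p q :: "real \<times> real" and L C \<epsilon> :: real and Y V :: "real \<Rightarrow> real \<times> real"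
    and \<theta> d\<theta> dPhi :: "real \<Rightarrow> real"
  assumes pq: "snd p = 0" "snd q = 0" "p \<noteq> q"
    and L_def: "L = dist p q" and C: "C > 0" and eps: "\<epsilon> \<in> {0<..1}"
    and YV: "H1_deriv 0 L Y V"
    and speed: "\<And>x. x \<in> {0..L} \<Longrightarrow> norm (V x) = curve_length L V / L"
    and ends: "Y 0 = p \<and> Y L = q"
    and horiz: "snd (V 0) = 0 \<and> snd (V L) = 0"
    and len: "curve_length L V - dist p q \<le> C * sqrt \<epsilon>"
    and lift: "H1_deriv 0 L \<theta> d\<theta>"
    and lift_eq: "\<And>x. x \<in> {0..L} \<Longrightarrow> V x = (curve_length L V / L) *\<^sub>R (cos (\<theta> x), sin (\<theta> x))"
    and PhiD: "W11_deriv 0 L (\<lambda>x. Phi (\<theta> x)) dPhi"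
  shows "1 \<le> curve_length L V / L" and "curve_length L V / L - 1 \<le> C * sqrt \<epsilon> / L"
    and "dPhi absolutely_integrable_on {0..L}" and "d\<theta> absolutely_integrable_on {0..L}"
    and "\<And>\<phi>. flat_test L \<phi> \<Longrightarrow>
          dens L (\<lambda>x. 2 * pi / (8 * sqrt 2) * dPhi x - d\<theta> x) \<phi> \<le> 3 * (C + L) * sqrt (sqrt \<epsilon>)"
proof -
  define lv where "lv = curve_length L V"
  define s where "s = lv / L"
  define c where "c = 2 * pi / (8 * sqrt 2)"
  have L0: "0 < L" using pq(3) L_def by simp
  have Vint: "(V has_integral (q - p)) {0..L}"
    using YV ends L0 unfolding H1_deriv_def W11_deriv_def by auto
  have "((fst \<circ> V) has_integral fst (q - p)) {0..L}"
    by (rule has_integral_linear[OF Vint bounded_linear_fst])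
  then have fstint: "((\<lambda>x. fst (V x)) has_integral (fst q - fst p)) {0..L}" by (simp add: o_def)
  have Vx: "V x = (s * cos (\<theta> x), s * sin (\<theta> x))" if "x \<in> {0..L}" for x
    using lift_eq[OF that] unfolding s_def lv_def by simp
  have s0: "0 \<le> s" using speed[of 0] L0 unfolding s_def lv_def by (metis atLeastAtMost_iff less_imp_le norm_ge_zero order_refl)
  define D where "D = fst q - fst p"
  have dist_eq: "dist p q = \<bar>D\<bar>"
  proof -
    have "dist p q = sqrt ((dist (fst p) (fst q))\<^sup>2 + (dist (snd p) (snd q))\<^sup>2)" by (simp add: dist_prod_def)
    also have "\<dots> = \<bar>D\<bar>" using pq(1,2) unfolding D_def by (simp add: dist_real_def abs_minus_commute)
    finally show ?thesis .
  qed
  have LD: "L = \<bar>D\<bar>" using L_def dist_eq by simp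
  have sne: "s \<noteq> 0"
  proof
    assume "s = 0"
    then have "((\<lambda>x. fst (V x)) has_integral 0) {0..L}"
      by (intro has_integral_eq[OF _ has_integral_0]) (simp add: Vx)
    then have "D = 0" using fstint has_integral_unique unfolding D_def by blast
    then show False using LD L0 by simp
  qed
  have spos: "0 < s" using s0 sne by simp
  define \<sigma> :: real where "\<sigma> = (if 0 \<le> D then 1 else -1)"
  have \<sigma>: "\<sigma> = 1 \<or> \<sigma> = -1" "\<sigma> * D = L" unfolding \<sigma>_def using LD by auto
  have cosint: "((\<lambda>x. cos (\<theta> x)) has_integral D / s) {0..L}"
  proof -
    have "((\<lambda>x. (1/s) * fst (V x)) has_integral (1/s) * D) {0..L}"
      using has_integral_mult_right[OF fstint] unfolding D_def .
    then have "((\<lambda>x. (1/s) * fst (V x)) has_integral D / s) {0..L}" by simp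
    then show ?thesis
      by (rule has_integral_eq[rotated]) (use spos in \<open>auto simp: Vx\<close>)
  qed
  define u where "u x = 1 - \<sigma> * cos (\<theta> x)" for x
  have uint: "(u has_integral (L - L / s)) {0..L}"
  proof -
    have "((\<lambda>x. 1 - \<sigma> * cos (\<theta> x)) has_integral (Henstock_Kurzweil_Integration.content {0..L} *\<^sub>R 1 - \<sigma> * (D / s))) {0..L}"
      by (intro has_integral_diff has_integral_const_real has_integral_mult_right cosint)
    moreover have "Henstock_Kurzweil_Integration.content {0..L} *\<^sub>R (1::real) - \<sigma> * (D / s) = L - L / s"
      using \<sigma>(2) L0 by (metis content_real less_imp_le diff_zero real_scaleR_def mult_1_right times_divide_eq_right)
    ultimately show ?thesis unfolding u_def by simp
  qed
  have u0: "0 \<le> u x" for x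
  proof -
    have "\<bar>\<sigma> * cos (\<theta> x)\<bar> \<le> 1" using \<sigma>(1) by (auto simp: abs_mult)
    then show ?thesis unfolding u_def by simp
  qed
  have "0 \<le> L - L / s" by (rule has_integral_nonneg[OF uint]) (use u0 in auto)
  then have "L / s \<le> L * 1" by simp
  then have s1: "1 \<le> s" using L0 spos by (simp add: divide_le_eq)
  have ell: "lv = s * L" unfolding s_def using L0 by simp
  have lenL: "s * L - L \<le> C * sqrt \<epsilon>" using len L_def unfolding lv_def[symmetric] ell by simp
  show "1 \<le> curve_length L V / L" using s1 unfolding s_def lv_def .
  show "curve_length L V / L - 1 \<le> C * sqrt \<epsilon> / L"
  proof -
    have "(s - 1) * L \<le> C * sqrt \<epsilon>" using lenL by (simp add: algebra_simps)
    then have "s - 1 \<le> C * sqrt \<epsilon> / L" using L0 by (simp add: pos_le_divide_eq)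
    then show ?thesis unfolding s_def lv_def .
  qed
  have ubound: "L - L / s \<le> C * sqrt \<epsilon>"
  proof -
    have "0 \<le> (s - 1)^2 / s" using spos by simp
    moreover have "(s - 1)^2 / s = s + 1 / s - 2" using spos by (simp add: field_simps power2_eq_square)
    ultimately have "2 \<le> s + 1 / s" by simp
    then have "L * 2 \<le> L * (s + 1 / s)" using L0 by (intro mult_left_mono) auto
    then have "L - L / s \<le> s * L - L" by (simp add: algebra_simps)
    then show ?thesis using lenL by simp
  qed
  have dthai: "d\<theta> absolutely_integrable_on {0..L}" using lift unfolding H1_deriv_def W11_deriv_def by blast
  have dPhiai: "dPhi absolutely_integrable_on {0..L}" using PhiD unfolding W11_deriv_def by blast
  show "dPhi absolutely_integrable_on {0..L}" "d\<theta> absolutely_integrable_on {0..L}" using dthai dPhiai by auto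
  define h where "h x = c * dPhi x - d\<theta> x" for x
  have hai: "h absolutely_integrable_on {0..L}"
    unfolding h_def by (intro set_integral_diff(1) set_integrable_mult_right dthai dPhiai)
  have \<theta>c: "continuous_on {0..L} \<theta>" using lift unfolding H1_deriv_def by (intro W11_cont) blast
  have ggz: "gg (\<theta> x) = 0" if "x = 0 \<or> x = L" for x
  proof -
    have "x \<in> {0..L}" using that L0 by auto
    moreover have "snd (V x) = 0" using horiz that by auto
    ultimately have "s * sin (\<theta> x) = 0" using Vx by simp
    then have "sin (\<theta> x) = 0" using sne by simp
    then obtain k :: int where "\<theta> x = of_int k * pi" using sin_zero_iff_int2 by blast
    then show ?thesis using gg_int by simp
  qed
  have Hint: "(h has_integral gg (\<theta> x)) {0..x}" if x: "x \<in> {0..L}" for x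
  proof -
    have a: "(dPhi has_integral Phi (\<theta> x) - Phi (\<theta> 0)) {0..x}" using PhiD x unfolding W11_deriv_def by blast
    have b: "(d\<theta> has_integral \<theta> x - \<theta> 0) {0..x}" using lift x unfolding H1_deriv_def W11_deriv_def by blast
    have "(h has_integral (c * (Phi (\<theta> x) - Phi (\<theta> 0)) - (\<theta> x - \<theta> 0))) {0..x}"
      unfolding h_def by (intro has_integral_diff has_integral_mult_right a b)
    moreover have "c * (Phi (\<theta> x) - Phi (\<theta> 0)) - (\<theta> x - \<theta> 0) = gg (\<theta> x) - gg (\<theta> 0)"
      unfolding gg_def c_def by (simp add: algebra_simps add_divide_distrib[symmetric] diff_divide_distrib)
    ultimately show ?thesis using ggz[of 0] by simp
  qed
  have Hc: "continuous_on {0..L} (\<lambda>x. gg (\<theta> x))"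
    by (rule continuous_on_compose2[OF gg_cont \<theta>c]) auto
  define \<delta> where "\<delta> = sqrt (sqrt \<epsilon>)"
  have \<delta>0: "0 < \<delta>" using eps unfolding \<delta>_def by simp
  have \<delta>2: "\<delta> * \<delta> = sqrt \<epsilon>" unfolding \<delta>_def using eps by simp
  have Jbound: "integral {0..L} (\<lambda>x. \<bar>gg (\<theta> x)\<bar>) \<le> 3 * (C + L) * \<delta>"
  proof -
    have i1: "((\<lambda>x. \<bar>gg (\<theta> x)\<bar>) has_integral integral {0..L} (\<lambda>x. \<bar>gg (\<theta> x)\<bar>)) {0..L}"
      by (intro integrable_integral integrable_continuous_interval continuous_intros Hc)
    have i2: "((\<lambda>x. (3 / \<delta>) * u x + 3 * \<delta>) has_integral ((3 / \<delta>) * (L - L / s) + Henstock_Kurzweil_Integration.content {0..L} *\<^sub>R (3 * \<delta>))) {0..L}"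
      by (intro has_integral_add has_integral_mult_right uint has_integral_const_real)
    have "integral {0..L} (\<lambda>x. \<bar>gg (\<theta> x)\<bar>) \<le> (3 / \<delta>) * (L - L / s) + Henstock_Kurzweil_Integration.content {0..L} *\<^sub>R (3 * \<delta>)"
    proof (rule has_integral_le[OF i1 i2])
      fix x assume "x \<in> {0..L}"
      have "\<bar>gg (\<theta> x)\<bar> \<le> 3 * \<bar>sin (\<theta> x)\<bar>" by (rule gg_bound)
      also have "\<bar>sin (\<theta> x)\<bar> \<le> (sin (\<theta> x))^2 / (2 * \<delta>) + \<delta> / 2" by (rule abs_amgm[OF \<delta>0])
      also have "(sin (\<theta> x))^2 / (2 * \<delta>) \<le> (2 * u x) / (2 * \<delta>)"
        using sin_sq_le[OF \<sigma>(1), of "\<theta> x"] \<delta>0 unfolding u_def by (intro divide_right_mono) auto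
      finally have "\<bar>gg (\<theta> x)\<bar> \<le> 3 * ((2 * u x) / (2 * \<delta>) + \<delta> / 2)" by simp
      also have "\<dots> \<le> (3 / \<delta>) * u x + 3 * \<delta>" using \<delta>0 by (simp add: field_simps)
      finally show "\<bar>gg (\<theta> x)\<bar> \<le> (3 / \<delta>) * u x + 3 * \<delta>" .
    qed
    also have "\<dots> \<le> (3 / \<delta>) * (C * sqrt \<epsilon>) + L * (3 * \<delta>)"
    proof -
      have a: "(3 / \<delta>) * (L - L / s) \<le> (3 / \<delta>) * (C * sqrt \<epsilon>)"
        using ubound \<delta>0 by (intro mult_left_mono) auto
      have b: "Henstock_Kurzweil_Integration.content {0..L} *\<^sub>R (3 * \<delta>) = L * (3 * \<delta>)" using L0 by simp
      show ?thesis using a b by linarith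
    qed
    also have "\<dots> = 3 * (C + L) * \<delta>"
      using \<delta>0 unfolding \<delta>2[symmetric] by (simp add: field_simps)
    finally show ?thesis .
  qed
  fix \<phi> assume ft: "flat_test L \<phi>"
  obtain K where K: "0 \<le> K" "K \<le> 1" and lip: "\<forall>x\<in>{0..L}. \<forall>y\<in>{0..L}. \<bar>\<phi> x - \<phi> y\<bar> \<le> K * \<bar>x - y\<bar>"
    using flat_test_props(3)[OF ft L0] by blast
  have \<phi>h: "(\<lambda>x. \<phi> x * h x) integrable_on {0..L}"
    using phi_int[OF ft L0 hai] by (simp add: absolutely_integrable_on_def)
  have "integral {0..L} (\<lambda>x. \<phi> x * h x) \<le> K * integral {0..L} (\<lambda>x. \<bar>gg (\<theta> x)\<bar>)"
    by (rule flat_key[OF L0 hai Hint _ Hc _ \<phi>h]) (use ggz lip in auto)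
  also have "\<dots> \<le> 1 * integral {0..L} (\<lambda>x. \<bar>gg (\<theta> x)\<bar>)"
    using K by (intro mult_right_mono Henstock_Kurzweil_Integration.integral_nonneg integrable_continuous_interval continuous_intros Hc) auto
  also have "\<dots> \<le> 3 * (C + L) * \<delta>" using Jbound by simp
  finally show "dens L (\<lambda>x. 2 * pi / (8 * sqrt 2) * dPhi x - d\<theta> x) \<phi> \<le> 3 * (C + L) * sqrt (sqrt \<epsilon>)"
    unfolding dens_def h_def c_def \<delta>_def .
qed

lemma atoms_abs:
  assumes "flat_test L \<phi>" "0 < L" "Mfin_data L N xs"
  shows "\<bar>atoms N c xs \<phi>\<bar> \<le> 2 * pi * (\<Sum>j<N. \<bar>of_int (c j)\<bar>)"
proof -
  have "\<bar>\<Sum>j<N. of_int (c j) * \<phi> (xs j)\<bar> \<le> (\<Sum>j<N. \<bar>of_int (c j) * \<phi> (xs j)\<bar>)" by (rule sum_abs)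
  also have "\<dots> \<le> (\<Sum>j<N. \<bar>of_int (c j)\<bar>)"
  proof (rule sum_mono)
    fix j assume "j \<in> {..<N}"
    then have "xs j \<in> {0..L}" using assms(3) by (auto simp: Mfin_data_def)
    then have "\<bar>\<phi> (xs j)\<bar> \<le> 1" by (rule flat_test_props(1)[OF assms(1,2)])
    then have "\<bar>of_int (c j)\<bar> * \<bar>\<phi> (xs j)\<bar> \<le> \<bar>of_int (c j)\<bar> * 1" by (intro mult_left_mono) auto
    then show "\<bar>of_int (c j) * \<phi> (xs j)\<bar> \<le> \<bar>of_int (c j)\<bar>" by (simp add: abs_mult)
  qed
  finally have "\<bar>\<Sum>j<N. of_int (c j) * \<phi> (xs j)\<bar> \<le> (\<Sum>j<N. \<bar>(of_int (c j) :: real)\<bar>)" .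
  then have "2 * pi * \<bar>\<Sum>j<N. of_int (c j) * \<phi> (xs j)\<bar> \<le> 2 * pi * (\<Sum>j<N. \<bar>(of_int (c j) :: real)\<bar>)"
    by (intro mult_left_mono) auto
  then show ?thesis unfolding atoms_def by (simp add: abs_mult)
qed

theorem lemma4p5:
  fixes p q :: "real \<times> real" and L C :: real
    and Y V A :: "real \<Rightarrow> real \<Rightarrow> real \<times> real"
    and G1 G2 :: "real \<Rightarrow> real \<Rightarrow> real \<times> real"
    and \<theta> d\<theta> dPhi\<theta> :: "real \<Rightarrow> real \<Rightarrow> real"
  assumes pq: "snd p = 0" "snd q = 0" "p \<noteq> q"
    and L_def: "L = dist p q"
    and C_pos: "C > 0"
    and H2: "\<And>\<epsilon>. \<epsilon> \<in> {0<..1} \<Longrightarrow> H2_derivs 0 L (Y \<epsilon>) (V \<epsilon>) (A \<epsilon>)"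
    and speed: "\<And>\<epsilon> x. \<epsilon> \<in> {0<..1} \<Longrightarrow> x \<in> {0..L} \<Longrightarrow>
                   norm (V \<epsilon> x) = curve_length L (V \<epsilon>) / L"
    and ends: "\<And>\<epsilon>. \<epsilon> \<in> {0<..1} \<Longrightarrow> Y \<epsilon> 0 = p \<and> Y \<epsilon> L = q"
    and horiz: "\<And>\<epsilon>. \<epsilon> \<in> {0<..1} \<Longrightarrow> snd (V \<epsilon> 0) = 0 \<and> snd (V \<epsilon> L) = 0"
    and len: "\<And>\<epsilon>. \<epsilon> \<in> {0<..1} \<Longrightarrow> curve_length L (V \<epsilon>) - dist p q \<le> C * sqrt \<epsilon>"
    and gamma: "\<And>\<epsilon>. \<epsilon> \<in> {0<..1} \<Longrightarrow>
                   H2_derivs 0 (curve_length L (V \<epsilon>))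
                     (\<lambda>s. Y \<epsilon> (s * L / curve_length L (V \<epsilon>))) (G1 \<epsilon>) (G2 \<epsilon>)"
    and energy: "\<And>\<epsilon>. \<epsilon> \<in> {0<..1} \<Longrightarrow>
                   sqrt \<epsilon> * integral {0..curve_length L (V \<epsilon>)} (\<lambda>s. (norm (G2 \<epsilon> s))\<^sup>2) \<le> C"
    and lift: "\<And>\<epsilon>. \<epsilon> \<in> {0<..1} \<Longrightarrow> H1_deriv 0 L (\<theta> \<epsilon>) (d\<theta> \<epsilon>)"
    and lift_eq: "\<And>\<epsilon> x. \<epsilon> \<in> {0<..1} \<Longrightarrow> x \<in> {0..L} \<Longrightarrow>
                   V \<epsilon> x = (curve_length L (V \<epsilon>) / L) *\<^sub>R (cos (\<theta> \<epsilon> x), sin (\<theta> \<epsilon> x))"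
    and Phi_deriv: "\<And>\<epsilon>. \<epsilon> \<in> {0<..1} \<Longrightarrow> W11_deriv 0 L (\<lambda>x. Phi (\<theta> \<epsilon> x)) (dPhi\<theta> \<epsilon>)"
  shows "((\<lambda>\<epsilon>. flat_norm L (dens L (\<lambda>x. 2 * pi / (8 * sqrt 2) * dPhi\<theta> \<epsilon> x - d\<theta> \<epsilon> x)))
            \<longlongrightarrow> 0) (at_right 0)
       \<and> (\<forall>(ek :: nat \<Rightarrow> real) N c xs.
            (\<forall>k. ek k \<in> {0<..1}) \<and> ek \<longlonglongrightarrow> 0 \<and> Mfin_data L N xs \<and>
            (\<lambda>k. flat_norm L (\<lambda>\<phi>. dens L (\<lambda>x. L / curve_length L (V (ek k)) * d\<theta> (ek k) x) \<phi>
                                   - atoms N c xs \<phi>)) \<longlonglongrightarrow> 0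
            \<longrightarrow> (\<lambda>k. flat_norm L (\<lambda>\<phi>. dens L (\<lambda>x. 2 * pi / (8 * sqrt 2) * dPhi\<theta> (ek k) x) \<phi>
                                   - atoms N c xs \<phi>)) \<longlonglongrightarrow> 0)"
proof -
  define c0 where "c0 = 2 * pi / (8 * sqrt 2)"
  have L0: "0 < L" using pq(3) L_def by simp
  have KE: "1 \<le> curve_length L (V \<epsilon>) / L \<and> curve_length L (V \<epsilon>) / L - 1 \<le> C * sqrt \<epsilon> / L
     \<and> dPhi\<theta> \<epsilon> absolutely_integrable_on {0..L} \<and> d\<theta> \<epsilon> absolutely_integrable_on {0..L}
     \<and> (\<forall>\<phi>. flat_test L \<phi> \<longrightarrow>
          dens L (\<lambda>x. 2 * pi / (8 * sqrt 2) * dPhi\<theta> \<epsilon> x - d\<theta> \<epsilon> x) \<phi> \<le> 3 * (C + L) * sqrt (sqrt \<epsilon>))"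
    if e: "\<epsilon> \<in> {0<..1}" for \<epsilon>
  proof -
    have YV: "H1_deriv 0 L (Y \<epsilon>) (V \<epsilon>)" using H2[OF e] unfolding H2_derivs_def by blast
    note k = key_eps[OF pq L_def C_pos e YV speed[OF e] ends[OF e] horiz[OF e] len[OF e] lift[OF e] lift_eq[OF e] Phi_deriv[OF e]]
    show ?thesis using k by blast
  qed
  define B where "B \<epsilon> = 3 * (C + L) * sqrt (sqrt \<epsilon>)" for \<epsilon> :: real
  have Blim: "((\<lambda>k. B (g k)) \<longlongrightarrow> 0) F" if g: "(g \<longlongrightarrow> 0) F" for g :: "'z \<Rightarrow> real" and F
  proof -
    have "((\<lambda>k. 3 * (C + L) * sqrt (sqrt (g k))) \<longlongrightarrow> 3 * (C + L) * sqrt (sqrt 0)) F"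
      by (intro tendsto_intros g)
    then show ?thesis unfolding B_def by simp
  qed
  have dens0: "dens L f (\<lambda>x. 0) = 0" for f unfolding dens_def by simp
  have atoms0: "atoms N cc xs (\<lambda>x. 0) = 0" for N cc xs unfolding atoms_def by simp
  have part1: "((\<lambda>\<epsilon>. flat_norm L (dens L (\<lambda>x. 2 * pi / (8 * sqrt 2) * dPhi\<theta> \<epsilon> x - d\<theta> \<epsilon> x))) \<longlongrightarrow> 0) (at_right 0)"
  proof (rule tendsto_sandwich[where f="\<lambda>\<epsilon>. 0" and h="\<lambda>\<epsilon>. B \<epsilon>"])
    have ev: "eventually (\<lambda>\<epsilon>. \<epsilon> \<in> {0<..1}) (at_right (0::real))"
      using eventually_at_right_real[of 0 1] by (rule eventually_mono) auto
    show "eventually (\<lambda>\<epsilon>. 0 \<le> flat_norm L (dens L (\<lambda>x. 2 * pi / (8 * sqrt 2) * dPhi\<theta> \<epsilon> x - d\<theta> \<epsilon> x))) (at_right 0)"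
      using ev
    proof (rule eventually_mono)
      fix \<epsilon> :: real assume e: "\<epsilon> \<in> {0<..1}"
      show "0 \<le> flat_norm L (dens L (\<lambda>x. 2 * pi / (8 * sqrt 2) * dPhi\<theta> \<epsilon> x - d\<theta> \<epsilon> x))"
        by (rule flat_le(1)[where B="B \<epsilon>"]) (use KE[OF e] dens0 in \<open>auto simp: B_def\<close>)
    qed
    show "eventually (\<lambda>\<epsilon>. flat_norm L (dens L (\<lambda>x. 2 * pi / (8 * sqrt 2) * dPhi\<theta> \<epsilon> x - d\<theta> \<epsilon> x)) \<le> B \<epsilon>) (at_right 0)"
      using ev
    proof (rule eventually_mono)
      fix \<epsilon> :: real assume e: "\<epsilon> \<in> {0<..1}"
      show "flat_norm L (dens L (\<lambda>x. 2 * pi / (8 * sqrt 2) * dPhi\<theta> \<epsilon> x - d\<theta> \<epsilon> x)) \<le> B \<epsilon>"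
        by (rule flat_le(2)[where B="B \<epsilon>"]) (use KE[OF e] dens0 in \<open>auto simp: B_def\<close>)
    qed
    show "((\<lambda>\<epsilon>. 0) \<longlongrightarrow> 0) (at_right 0)" by simp
    show "((\<lambda>\<epsilon>. B \<epsilon>) \<longlongrightarrow> 0) (at_right 0)"
      using Blim[of "\<lambda>\<epsilon>. \<epsilon>" "at_right 0"] by (simp add: tendsto_ident_at)
  qed
  show ?thesis
  proof (rule conjI[OF part1], intro allI impI)
    fix ek :: "nat \<Rightarrow> real" and N c xs
    assume A: "(\<forall>k. ek k \<in> {0<..1}) \<and> ek \<longlonglongrightarrow> 0 \<and> Mfin_data L N xs \<and>
            (\<lambda>k. flat_norm L (\<lambda>\<phi>. dens L (\<lambda>x. L / curve_length L (V (ek k)) * d\<theta> (ek k) x) \<phi>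
                                   - atoms N c xs \<phi>)) \<longlonglongrightarrow> 0"
    then have ekin: "\<And>k. ek k \<in> {0<..1}" and eklim: "ek \<longlonglongrightarrow> 0" and mf: "Mfin_data L N xs"
      and Flim0: "(\<lambda>k. flat_norm L (\<lambda>\<phi>. dens L (\<lambda>x. L / curve_length L (V (ek k)) * d\<theta> (ek k) x) \<phi>
                                   - atoms N c xs \<phi>)) \<longlonglongrightarrow> 0" by auto
    define s where "s k = curve_length L (V (ek k)) / L" for k
    define T where "T k = (\<lambda>\<phi>. dens L (\<lambda>x. L / curve_length L (V (ek k)) * d\<theta> (ek k) x) \<phi> - atoms N c xs \<phi>)" for k
    define Fk where "Fk k = flat_norm L (T k)" for k
    define Bat :: real where "Bat = 2 * pi * (\<Sum>j<N. \<bar>of_int (c j)\<bar>)"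
    have Flim: "Fk \<longlonglongrightarrow> 0" using Flim0 unfolding Fk_def T_def .
    have s1: "1 \<le> s k" and s2: "s k - 1 \<le> C * sqrt (ek k) / L" for k
      using KE[OF ekin[of k]] unfolding s_def by auto
    have Tup: "T k \<phi> \<le> Fk k" if ft: "flat_test L \<phi>" for k \<phi>
    proof -
      define g where "g x = L / curve_length L (V (ek k)) * d\<theta> (ek k) x" for x
      have gai: "g absolutely_integrable_on {0..L}"
        unfolding g_def by (intro set_integrable_mult_right) (use KE[OF ekin[of k]] in blast)
      have "T k \<psi> \<le> integral {0..L} (\<lambda>x. \<bar>g x\<bar>) + Bat" if ft': "flat_test L \<psi>" for \<psi>
      proof -
        have "dens L g \<psi> \<le> integral {0..L} (\<lambda>x. \<bar>g x\<bar>)" by (rule dens_le_abs[OF ft' L0 gai])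
        moreover have "\<bar>atoms N c xs \<psi>\<bar> \<le> Bat" unfolding Bat_def by (rule atoms_abs[OF ft' L0 mf])
        ultimately show ?thesis unfolding T_def g_def by linarith
      qed
      then show ?thesis unfolding Fk_def by (rule flat_upper[OF _ ft])
    qed
    define Bnd where "Bnd k = B (ek k) + s k * Fk k + (s k - 1) * Bat" for k
    define G where "G k = (\<lambda>\<phi>. dens L (\<lambda>x. 2 * pi / (8 * sqrt 2) * dPhi\<theta> (ek k) x) \<phi> - atoms N c xs \<phi>)" for k
    have Gle: "G k \<phi> \<le> Bnd k" if ft: "flat_test L \<phi>" for k \<phi>
    proof -
      define e where "e = ek k"
      define lv where "lv = curve_length L (V e)"
      have e: "e \<in> {0<..1}" unfolding e_def by (rule ekin)
      note ke = KE[OF e]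
      have sk: "s k = lv / L" unfolding s_def lv_def e_def ..
      have lv0: "0 < lv" using s1[of k] L0 unfolding sk by (simp add: le_divide_eq)
      have i1: "(\<lambda>x. \<phi> x * (c0 * dPhi\<theta> e x)) integrable_on {0..L}"
        using phi_int[OF ft L0 set_integrable_mult_right[of c0 lebesgue "{0..L}" "dPhi\<theta> e"]] ke
        by (simp add: absolutely_integrable_on_def)
      have i2: "(\<lambda>x. \<phi> x * d\<theta> e x) integrable_on {0..L}"
        using phi_int[OF ft L0] ke by (simp add: absolutely_integrable_on_def)
      define I2 where "I2 = integral {0..L} (\<lambda>x. \<phi> x * d\<theta> e x)"
      have eq1: "dens L (\<lambda>x. c0 * dPhi\<theta> e x - d\<theta> e x) \<phi> = dens L (\<lambda>x. c0 * dPhi\<theta> e x) \<phi> - I2"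
      proof -
        have "dens L (\<lambda>x. c0 * dPhi\<theta> e x - d\<theta> e x) \<phi> = integral {0..L} (\<lambda>x. \<phi> x * (c0 * dPhi\<theta> e x) - \<phi> x * d\<theta> e x)"
          unfolding dens_def by (simp add: right_diff_distrib)
        also have "\<dots> = dens L (\<lambda>x. c0 * dPhi\<theta> e x) \<phi> - I2"
          unfolding dens_def I2_def by (rule Henstock_Kurzweil_Integration.integral_diff[OF i1 i2])
        finally show ?thesis .
      qed
      have eq2: "T k \<phi> = (L / lv) * I2 - atoms N c xs \<phi>"
      proof -
        have "dens L (\<lambda>x. L / lv * d\<theta> e x) \<phi> = integral {0..L} (\<lambda>x. (L / lv) * (\<phi> x * d\<theta> e x))"
          unfolding dens_def by (simp add: mult.left_commute)
        also have "\<dots> = (L / lv) * I2" unfolding I2_def by (rule integral_mult[OF i2, symmetric])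
        finally show ?thesis unfolding T_def lv_def e_def by simp
      qed
      have sL: "s k * (L / lv) = 1" unfolding sk using lv0 L0 by simp
      have "G k \<phi> = dens L (\<lambda>x. c0 * dPhi\<theta> e x - d\<theta> e x) \<phi> + s k * T k \<phi> + (s k - 1) * atoms N c xs \<phi>"
      proof -
        have "s k * T k \<phi> = (s k * (L / lv)) * I2 - s k * atoms N c xs \<phi>" unfolding eq2
          by (simp only: right_diff_distrib mult.assoc)
        then have "s k * T k \<phi> = I2 - s k * atoms N c xs \<phi>" unfolding sL by simp
        moreover have "G k \<phi> = dens L (\<lambda>x. c0 * dPhi\<theta> e x) \<phi> - atoms N c xs \<phi>"
          unfolding G_def c0_def e_def by (rule refl)
        moreover have "(s k - 1) * atoms N c xs \<phi> = s k * atoms N c xs \<phi> - atoms N c xs \<phi>"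
          by (simp add: algebra_simps)
        ultimately show ?thesis using eq1 by linarith
      qed
      also have "\<dots> \<le> B e + s k * Fk k + (s k - 1) * Bat"
      proof -
        have a: "dens L (\<lambda>x. c0 * dPhi\<theta> e x - d\<theta> e x) \<phi> \<le> B e" using ke ft unfolding B_def c0_def by blast
        have b: "s k * T k \<phi> \<le> s k * Fk k" using Tup[OF ft] s1[of k] by (intro mult_left_mono) auto
        have "atoms N c xs \<phi> \<le> Bat" unfolding Bat_def by (rule atoms_le[OF ft L0 mf])
        then have c: "(s k - 1) * atoms N c xs \<phi> \<le> (s k - 1) * Bat" using s1[of k] by (intro mult_left_mono) auto
        show ?thesis using a b c by linarith
      qed
      finally show ?thesis unfolding Bnd_def e_def .
    qed
    have slim: "s \<longlonglongrightarrow> 1"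
    proof (rule tendsto_sandwich[where f="\<lambda>k. 1" and h="\<lambda>k. 1 + C * sqrt (ek k) / L"])
      show "eventually (\<lambda>k. 1 \<le> s k) sequentially" using s1 by simp
      show "eventually (\<lambda>k. s k \<le> 1 + C * sqrt (ek k) / L) sequentially" using s2 by (simp add: algebra_simps)
      show "(\<lambda>k. 1) \<longlonglongrightarrow> (1::real)" by simp
      have "(\<lambda>k. 1 + C * sqrt (ek k) / L) \<longlonglongrightarrow> 1 + C * sqrt 0 / L" by (intro tendsto_intros eklim) (use L0 in simp)
      then show "(\<lambda>k. 1 + C * sqrt (ek k) / L) \<longlonglongrightarrow> 1" by simp
    qed
    have Bndlim: "Bnd \<longlonglongrightarrow> 0"
    proof -
      have "(\<lambda>k. B (ek k) + s k * Fk k + (s k - 1) * Bat) \<longlonglongrightarrow> 0 + 1 * 0 + (1 - 1) * Bat"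
        by (intro tendsto_intros Blim eklim slim Flim)
      then show ?thesis unfolding Bnd_def by simp
    qed
    have "(\<lambda>k. flat_norm L (G k)) \<longlonglongrightarrow> 0"
    proof (rule tendsto_sandwich[where f="\<lambda>k. 0" and h="Bnd"])
      have g0: "G k (\<lambda>x. 0) = 0" for k by (simp add: G_def dens0 atoms0)
      show "eventually (\<lambda>k. 0 \<le> flat_norm L (G k)) sequentially"
      proof (rule always_eventually, rule allI)
        fix k show "0 \<le> flat_norm L (G k)" by (rule flat_le(1)[where T="G k" and B="Bnd k", OF Gle g0])
      qed
      show "eventually (\<lambda>k. flat_norm L (G k) \<le> Bnd k) sequentially"
      proof (rule always_eventually, rule allI)
        fix k show "flat_norm L (G k) \<le> Bnd k" by (rule flat_le(2)[where T="G k" and B="Bnd k", OF Gle g0])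
      qed
      show "(\<lambda>k. 0) \<longlonglongrightarrow> (0::real)" by simp
      show "Bnd \<longlonglongrightarrow> 0" by (rule Bndlim)
    qed
    then show "(\<lambda>k. flat_norm L (\<lambda>\<phi>. dens L (\<lambda>x. 2 * pi / (8 * sqrt 2) * dPhi\<theta> (ek k) x) \<phi>
                                   - atoms N c xs \<phi>)) \<longlonglongrightarrow> 0" unfolding G_def .
  qed
qed

end
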